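(* Let $M$ be a matroid of rank $r$ on a ground set of $n$ elements, and write its Tutte polynomial as $T(M;x,y)=\sum_{i,j} b_{i,j}x^iy^j$. Then $$\sum_{i=0}^{n}\sum_{j=0}^{n-i}(-1)^j\binom{n-i}{j}b_{i,j}=(-1)^{n-r}.$$
   Context: For a matroid $M$ on ground set $E$ with rank function $r$, the Tutte polynomial is $T(M;x,y)=\sum_{A\subseteq E}(x-1)^{r(E)-r(A)}(y-1)^{|A|-r(A)}$; the rank of $M$ is $r(E)$. *)

theory Defs
  imports "HOL-Computational_Algebra.Polynomial"
begin

text \<open>A matroid on a finite ground set E, given by its rank function (rank axioms R1-R3).
  The rank function is only meaningful on subsets of E.\<close>
definition matroid_rank :: "'a set \<Rightarrow> ('a set \<Rightarrow> nat) \<Rightarrow> bool" where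
  "matroid_rank E rk \<longleftrightarrow> finite E
     \<and> (\<forall>A. A \<subseteq> E \<longrightarrow> rk A \<le> card A)
     \<and> (\<forall>A B. A \<subseteq> B \<and> B \<subseteq> E \<longrightarrow> rk A \<le> rk B)
     \<and> (\<forall>A B. A \<subseteq> E \<and> B \<subseteq> E \<longrightarrow> rk (A \<union> B) + rk (A \<inter> B) \<le> rk A + rk B)"

text \<open>Bivariate integer polynomials are represented as polynomials in y whose
  coefficients are polynomials in x: type int poly poly.  The coefficient of
  x^i y^j in P is coeff (coeff P j) i.\<close>
definition tutte :: "'a set \<Rightarrow> ('a set \<Rightarrow> nat) \<Rightarrow> int poly poly" where
  "tutte E rk = (\<Sum>A\<in>Pow E.
      [: [:-1, 1:] ^ (rk E - rk A) :] * [: [:-1:], 1 :] ^ (card A - rk A))"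

definition tutte_coeff :: "'a set \<Rightarrow> ('a set \<Rightarrow> nat) \<Rightarrow> nat \<Rightarrow> nat \<Rightarrow> int" where
  "tutte_coeff E rk i j = coeff (coeff (tutte E rk) j) i"

end

theory Submission imports Defs "HOL-Computational_Algebra.Formal_Power_Series" begin
unbundle fps_syntax

definition VV :: "int fps" where "VV = Abs_fps (\<lambda>_. 1)"

lemma VV_nth [simp]: "VV $ n = 1" by (simp add: VV_def)

lemma VV_inv: "(1 - fps_X) * VV = 1"
  by (rule fps_ext) (simp add: VV_def algebra_simps)

lemma VV_rec: "F = VV * G \<Longrightarrow> F = G + fps_X * F"
proof -
  assume "F = VV * G"
  hence "(1 - fps_X) * F = G" using VV_inv by (simp add: mult.assoc[symmetric])
  thus ?thesis by (simp add: algebra_simps)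
qed

lemma VV_pow_nth: "(VV^(Suc k)) $ m = int ((m + k) choose k)"
proof (induction k arbitrary: m)
  case 0 then show ?case by (simp add: VV_def)
next
  case (Suc k)
  note outer = Suc.IH
  have rec: "VV^(Suc (Suc k)) = VV^(Suc k) + fps_X * VV^(Suc (Suc k))"
    by (rule VV_rec) simp
  show ?case
  proof (induction m)
    case 0
    have "(VV^(Suc (Suc k))) $ 0 = VV^(Suc k) $ 0"
      by (subst rec) (simp del: power_Suc)
    then show ?case using outer[of 0] by simp
  next
    case (Suc m)
    have "(VV^(Suc (Suc k))) $ Suc m = VV^(Suc k) $ Suc m + VV^(Suc (Suc k)) $ m"
      by (subst rec) (simp del: power_Suc)
    also have "\<dots> = int ((Suc m + k) choose k) + int ((m + Suc k) choose Suc k)"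
      using outer[of "Suc m"] Suc.IH by (simp del: power_Suc)
    also have "\<dots> = int ((Suc m + Suc k) choose Suc k)"
      by simp
    finally show ?case .
  qed
qed

definition YY :: "int fps" where "YY = - fps_X * VV"

lemma YY_m1: "YY - 1 = - VV"
proof -
  have "YY - 1 = - fps_X * VV - (1 - fps_X) * VV" by (simp add: VV_inv YY_def)
  thus ?thesis by (simp add: algebra_simps)
qed

lemma fps_m1_pow: "(-1::int fps)^m = fps_const ((-1)^m)"
proof (induction m)
  case 0 show ?case by simp
next
  case (Suc m)
  have "(-1::int fps)^Suc m = - fps_const ((-1)^m)"
    by (simp only: power_Suc Suc.IH mult_minus_left mult_1_left)
  also have "\<dots> = fps_const ((-1)^Suc m)" by (simp only: fps_const_neg power_Suc) simp
  finally show ?case .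
qed

lemma g_nth: "(fps_X^i * YY^j * VV) $ n = (if i \<le> n then (-1)^j * int ((n-i) choose j) else 0)"
proof -
  have "fps_X^i * YY^j * VV = fps_X^(i+j) * (fps_const ((-1)^j) * VV^(Suc j))"
  proof -
    have "YY^j = (-1)^j * (fps_X^j * VV^j)"
      unfolding YY_def mult_minus_left by (subst power_minus) (simp only: power_mult_distrib)
    hence "YY^j = fps_const ((-1)^j) * (fps_X^j * VV^j)" by (simp only: fps_m1_pow)
    thus ?thesis by (simp only: power_add power_Suc ac_simps)
  qed
  also have "\<dots> $ n = (if i + j \<le> n then (-1)^j * int ((n-i) choose j) else 0)"
    by (simp only: fps_X_power_mult_nth fps_mult_left_const_nth VV_pow_nth) auto
  finally show ?thesis by auto
qed

lemma coeff_lin_pow: "coeff ([:a, 1:] ^ n) i = of_nat (n choose i) * (a::'b::comm_ring_1) ^ (n - i)"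
proof (cases "i \<le> n")
  case True then show ?thesis by (simp add: coeff_linear_poly_power)
next
  case False
  have "degree ([:a, 1:] ^ n) \<le> n"
    by (rule order.trans[OF degree_power_le]) simp
  then show ?thesis using False by (simp add: coeff_eq_0 binomial_eq_0)
qed

lemma coeff_term:
  "coeff (coeff ([: [:-1,1:]^p :] * [:[:-1:],1:]^q) j) i
     = (int (p choose i) * (-1)^(p-i)) * (int (q choose j) * (-1)^(q-j))"
proof -
  have "coeff ([: [:-1,1:]^p :] * [:[:-1:],1:]^q) j = [:-1,1:]^p * coeff ([:[:-1:],1:]^q) j"
    by simp
  also have "\<dots> = smult (int (q choose j) * (-1)^(q-j)) ([:-1,1:]^p)"
    by (simp add: coeff_lin_pow of_nat_poly poly_const_pow mult.commute)
  finally show ?thesis by (simp add: coeff_lin_pow)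
qed

lemma sum_pow_card: "finite E \<Longrightarrow> (\<Sum>A\<in>Pow E. (c::'b::comm_ring_1) ^ card A) = (1 + c) ^ card E"
proof (induction E rule: finite_induct)
  case empty then show ?case by simp
next
  case (insert x F)
  have disj: "Pow F \<inter> insert x ` Pow F = {}" using insert by auto
  have inj: "inj_on (insert x) (Pow F)" using insert unfolding inj_on_def by auto
  have "(\<Sum>A\<in>Pow (insert x F). c ^ card A)
        = (\<Sum>A\<in>Pow F. c ^ card A) + (\<Sum>A\<in>insert x ` Pow F. c ^ card A)"
    using insert by (simp add: Pow_insert sum.union_disjoint disj)
  also have "(\<Sum>A\<in>insert x ` Pow F. c ^ card A) = (\<Sum>A\<in>Pow F. c * c ^ card A)"
    using insert by (subst sum.reindex[OF inj]) (auto intro!: sum.cong simp: card_insert_if finite_subset)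
  finally show ?case using insert by (simp add: sum_distrib_left[symmetric] algebra_simps)
qed

lemma fps_const_aux: "fps_const (int k * (-1)^m) = (of_nat k * (-1)^m :: int fps)"
proof -
  have "(of_nat k :: int fps) = fps_const (int k)" by (simp add: fps_of_nat)
  thus ?thesis by (simp add: fps_m1_pow)
qed

lemma binom_expand:
  "((c::int fps) - 1)^p = (\<Sum>i\<le>p. fps_const (int (p choose i) * (-1)^(p-i)) * c^i)"
proof -
  have "(c - 1)^p = (c + (-1))^p" by simp
  also have "\<dots> = (\<Sum>i\<le>p. of_nat (p choose i) * c^i * (-1)^(p-i))"
    by (rule binomial_ring)
  also have "\<dots> = (\<Sum>i\<le>p. fps_const (int (p choose i) * (-1)^(p-i)) * c^i)"
    by (intro sum.cong refl) (simp only: fps_const_aux mult_ac)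
  finally show ?thesis .
qed

lemma per_term:
  assumes "p \<le> n" "q \<le> n"
  shows "(\<Sum>i=0..n. \<Sum>j=0..n-i. (-1::int)^j * int ((n-i) choose j) *
            ((int (p choose i) * (-1)^(p-i)) * (int (q choose j) * (-1)^(q-j))))
         = ((fps_X - 1)^p * (YY - 1)^q * VV) $ n"
proof -
  define c where "c i j = (int (p choose i) * (-1::int)^(p-i)) * (int (q choose j) * (-1)^(q-j))" for i j
  define h where "h i j = (-1::int)^j * int ((n-i) choose j) * c i j" for i j
  have L: "(\<Sum>i=0..n. \<Sum>j=0..n-i. (-1::int)^j * int ((n-i) choose j) *
            ((int (p choose i) * (-1)^(p-i)) * (int (q choose j) * (-1)^(q-j))))
        = (\<Sum>i\<le>n. \<Sum>j\<le>n. h i j)"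
    unfolding h_def c_def atLeast0AtMost
    by (intro sum.cong refl sum.mono_neutral_left) (auto simp: binomial_eq_0)
  have "(fps_X - 1)^p * (YY - 1)^q * VV
      = (\<Sum>i\<le>p. \<Sum>j\<le>q. fps_const (c i j) * (fps_X^i * YY^j * VV))"
    unfolding binom_expand[of fps_X] binom_expand[of YY] c_def
    by (simp add: sum_distrib_left sum_distrib_right fps_const_mult mult_ac) (rule sum.swap)
  hence "((fps_X - 1)^p * (YY - 1)^q * VV) $ n
     = (\<Sum>i\<le>p. \<Sum>j\<le>q. (fps_const (c i j) * (fps_X^i * YY^j * VV)) $ n)"
    by (simp only: fps_sum_nth)
  also have "\<dots> = (\<Sum>i\<le>p. \<Sum>j\<le>q. c i j * (if i \<le> n then (-1)^j * int ((n-i) choose j) else 0))"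
    by (simp only: fps_mult_left_const_nth g_nth)
  also have "\<dots> = (\<Sum>i\<le>p. \<Sum>j\<le>q. h i j)"
    using assms by (intro sum.cong refl) (auto simp: h_def)
  also have "\<dots> = (\<Sum>i\<le>n. \<Sum>j\<le>n. h i j)"
  proof -
    have "(\<Sum>i\<le>p. \<Sum>j\<le>q. h i j) = (\<Sum>i\<le>p. \<Sum>j\<le>n. h i j)"
      using assms unfolding h_def c_def
      by (intro sum.cong refl sum.mono_neutral_left) (auto simp: binomial_eq_0)
    also have "\<dots> = (\<Sum>i\<le>n. \<Sum>j\<le>n. h i j)"
      using assms unfolding h_def c_def
      by (intro sum.mono_neutral_left) (auto simp: binomial_eq_0)
    finally show ?thesis .
  qed
  finally show ?thesis using L by simp
qed

lemma per_set:
  assumes "s \<le> r" "s \<le> a"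
  shows "(fps_X - 1)^(r - s) * (YY - 1)^(a - s) * VV = (fps_X - 1)^r * VV * (-VV)^a"
proof -
  have one: "(fps_X - 1) * (-VV) = 1" using VV_inv by (simp add: algebra_simps)
  have pr: "(fps_X - 1)^r = (fps_X - 1)^(r-s) * (fps_X - 1)^s"
    using assms by (simp add: power_add[symmetric])
  have pa: "(-VV)^a = (-VV)^(a-s) * (-VV)^s"
    using assms by (simp add: power_add[symmetric])
  have ps: "(fps_X - 1)^s * (-VV)^s = 1"
    by (simp only: power_mult_distrib[symmetric] one power_one)
  have "(fps_X - 1)^r * VV * (-VV)^a
      = (fps_X - 1)^(r - s) * (-VV)^(a - s) * VV * ((fps_X - 1)^s * (-VV)^s)"
    unfolding pr pa by (simp only: mult_ac)
  also have "\<dots> = (fps_X - 1)^(r - s) * (YY - 1)^(a - s) * VV"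
    by (simp add: ps YY_m1)
  finally show ?thesis by (rule sym)
qed

lemma total:
  assumes "finite E" "r \<le> card E"
  shows "(\<Sum>A\<in>Pow E. (fps_X - 1)^r * VV * (-VV)^card A) $ card E = (-1)^(card E - r)"
proof -
  define n where "n = card E"
  have oneV: "1 - VV = - fps_X * VV" using VV_inv by (simp add: algebra_simps)
  have one: "(fps_X - 1) * (-VV) = 1" using VV_inv by (simp add: algebra_simps)
  have "(\<Sum>A\<in>Pow E. (fps_X - 1)^r * VV * (-VV)^card A) = (fps_X - 1)^r * VV * (1 - VV)^n"
    using assms by (simp add: sum_distrib_left[symmetric] sum_pow_card n_def)
  also have "\<dots> = fps_X^n * ((fps_X - 1)^r * (-VV)^r) * ((-1)^(n - r) * VV^(Suc (n - r)))"
  proof -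
    have e1: "(1 - VV)^n = fps_X^n * (-VV)^n" unfolding oneV by (simp add: power_mult_distrib[symmetric])
    have e2: "(-VV)^n = (-VV)^r * (-VV)^(n-r)"
      using assms by (simp add: power_add[symmetric] n_def)
    have e3: "(-VV)^(n-r) = (-1)^(n-r) * VV^(n-r)"
      by (rule power_minus)
    show ?thesis unfolding e1 e2 e3 by (simp only: power_Suc mult_ac)
  qed
  also have "\<dots> = fps_X^n * (fps_const ((-1)^(n - r)) * VV^(Suc (n - r)))"
  proof -
    have "(fps_X - 1)^r * (-VV)^r = 1"
      by (simp only: power_mult_distrib[symmetric] one power_one)
    thus ?thesis by (simp only: fps_m1_pow mult_1_right)
  qed
  finally show ?thesis by (simp add: fps_X_power_mult_nth VV_pow_nth n_def del: power_Suc)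
qed

theorem corollary5p2:
  fixes E :: "'a set" and rk :: "'a set \<Rightarrow> nat" and n r :: nat
  assumes "matroid_rank E rk"
    and "n = card E" and "r = rk E"
  shows "(\<Sum>i=0..n. \<Sum>j=0..n-i. (-1::int)^j * int ((n-i) choose j) * tutte_coeff E rk i j)
           = (-1::int)^(n-r)"
proof -
  have fin: "finite E" and le1: "\<And>A. A \<subseteq> E \<Longrightarrow> rk A \<le> card A"
    and le2: "\<And>A. A \<subseteq> E \<Longrightarrow> rk A \<le> rk E"
    using assms(1) unfolding matroid_rank_def by auto
  have rn: "r \<le> n" using le1[of E] assms by simp
  have tc: "tutte_coeff E rk i j = (\<Sum>A\<in>Pow E. coeff (coeff ([: [:-1, 1:] ^ (rk E - rk A) :]
              * [: [:-1:], 1 :] ^ (card A - rk A)) j) i)" for i j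
    unfolding tutte_coeff_def tutte_def by (simp add: coeff_sum)
  have "(\<Sum>i=0..n. \<Sum>j=0..n-i. (-1::int)^j * int ((n-i) choose j) * tutte_coeff E rk i j)
      = (\<Sum>A\<in>Pow E. \<Sum>i=0..n. \<Sum>j=0..n-i. (-1::int)^j * int ((n-i) choose j) *
          ((int ((rk E - rk A) choose i) * (-1)^((rk E - rk A)-i)) *
           (int ((card A - rk A) choose j) * (-1)^((card A - rk A)-j))))"
    unfolding tc coeff_term sum_distrib_left
    by (simp only: sum.swap[where A = "Pow E"])
  also have "\<dots> = (\<Sum>A\<in>Pow E. ((fps_X - 1)^(rk E - rk A) * (YY - 1)^(card A - rk A) * VV) $ n)"
  proof (intro sum.cong refl per_term)
    fix A assume "A \<in> Pow E"
    hence "card A \<le> n" using assms(2) fin by (simp add: card_mono)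
    thus "card A - rk A \<le> n" by simp
    show "rk E - rk A \<le> n" using rn assms(3) by simp
  qed
  also have "\<dots> = (\<Sum>A\<in>Pow E. (fps_X - 1)^r * VV * (-VV)^card A) $ n"
    unfolding fps_sum_nth assms(3)
    by (intro sum.cong refl arg_cong[where f = "\<lambda>F. F $ n"] per_set) (auto intro: le1 le2)
  also have "\<dots> = (-1)^(n - r)"
    using total[OF fin, of r] rn assms(2) by simp
  finally show ?thesis .
qed

end
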